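(* Let $C_1,C_2\subseteq\mathbb{R}^d$ be convex polyhedral sets with $C_1\cap C_2\neq\emptyset$. Then there exists a constant $M>0$ such that for all $x\in C_1$ and $y\in C_2$, $$\Big\|\mathrm{proj}_{C_1}(x)+\mathrm{proj}_{C_2}(y)-2\,\mathrm{proj}_{C_1\cap C_2}\Big(\frac{x+y}{2}\Big)\Big\|\le M\,\|\mathrm{proj}_{C_1}(x)-\mathrm{proj}_{C_2}(y)\|.$$
   Context: $\|\cdot\|$ is the Euclidean norm and $\mathrm{proj}_C(z)=\arg\min_{u\in C}\|z-u\|$ is the Euclidean projection onto a nonempty closed convex set $C$. A convex polyhedral set is a finite intersection of closed half-spaces. *)

theory Defs
  imports "HOL-Analysis.Analysis"
begin

end

theory Submission imports Defs begin

lemma polyhedron_conic_local: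
  fixes Q :: "'a::euclidean_space set"
  assumes "polyhedron Q" "0 \<in> Q"
  shows "\<exists>\<delta>>0. \<forall>v. norm v \<le> \<delta> \<longrightarrow> v \<in> conic hull Q \<longrightarrow> v \<in> Q"
proof -
  obtain F where F: "finite F" "Q = \<Inter>F" "\<forall>h\<in>F. \<exists>a b. a \<noteq> 0 \<and> h = {x. a \<bullet> x \<le> b}"
    using assms(1) unfolding polyhedron_def by blast
  from F(3) obtain a b where ab: "\<forall>h\<in>F. a h \<noteq> 0 \<and> h = {x. a h \<bullet> x \<le> b h}"
    by metis
  define d where "d h = (if b h > 0 then b h / norm (a h) else 1)" for h
  define \<delta> where "\<delta> = Min (insert 1 (d ` F))"
  have dpos: "d h > 0" if "h \<in> F" for h
    using ab that by (auto simp: d_def)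
  have "\<delta> > 0" unfolding \<delta>_def using F(1) dpos by (subst Min_gr_iff) auto
  moreover have "v \<in> Q" if v: "norm v \<le> \<delta>" "v \<in> conic hull Q" for v
  proof -
    have "v \<in> h" if h: "h \<in> F" for h
    proof -
      have hh: "h = {x. a h \<bullet> x \<le> b h}" using ab h by blast
      have mem: "y \<in> h \<longleftrightarrow> a h \<bullet> y \<le> b h" for y by (subst hh) simp
      have "0 \<in> h" using assms(2) F(2) h by auto
      then have b0: "b h \<ge> 0" by (simp add: mem)
      have "a h \<bullet> v \<le> b h"
      proof (cases "b h > 0")
        case True
        have "\<delta> \<le> d h" unfolding \<delta>_def using F(1) h by auto
        then have "norm v \<le> b h / norm (a h)" using v True by (simp add: d_def)
        then have "norm (a h) * norm v \<le> b h" using ab h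
          by (simp add: field_simps)
        moreover have "a h \<bullet> v \<le> norm (a h) * norm v"
          using norm_cauchy_schwarz by blast
        ultimately show ?thesis by linarith
      next
        case False
        obtain c q where cq: "v = c *\<^sub>R q" "0 \<le> c" "q \<in> Q"
          using v(2) unfolding conic_hull_explicit by blast
        have "a h \<bullet> q \<le> b h" using cq(3) F(2) h mem by auto
        then have "a h \<bullet> q \<le> 0" using False by linarith
        then have "c * (a h \<bullet> q) \<le> 0" using cq(2) by (simp add: mult_nonneg_nonpos)
        then show ?thesis using cq(1) b0 by simp
      qed
      then show ?thesis using mem by auto
    qed
    then show ?thesis using F(2) by auto
  qed
  ultimately show ?thesis by blast
qed

lemma normal_cone_active:
  fixes \<alpha> :: "'i \<Rightarrow> 'a::euclidean_space" and \<beta> :: "'i \<Rightarrow> real"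
  assumes fin: "finite I" and P: "P = {x. \<forall>i\<in>I. \<alpha> i \<bullet> x \<le> \<beta> i}"
    and p: "p \<in> P" and vi: "\<forall>w\<in>P. (z - p) \<bullet> (w - p) \<le> 0"
  shows "z - p \<in> conic hull (convex hull (insert 0 (\<alpha> ` {i\<in>I. \<alpha> i \<bullet> p = \<beta> i})))"
proof (rule ccontr)
  define A where "A = {i\<in>I. \<alpha> i \<bullet> p = \<beta> i}"
  define K where "K = conic hull (convex hull (insert 0 (\<alpha> ` A)))"
  assume "z - p \<notin> conic hull (convex hull (insert 0 (\<alpha> ` {i\<in>I. \<alpha> i \<bullet> p = \<beta> i})))"
  then have nK: "z - p \<notin> K" unfolding K_def A_def .
  have finA: "finite A" using fin unfolding A_def by auto
  have "polyhedron K" unfolding K_def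
    by (rule polyhedron_conic_hull_polytope, rule polytope_convex_hull) (use finA in auto)
  then have cK: "closed K" by (rule polyhedron_imp_closed)
  have vK: "convex K" unfolding K_def by (intro convex_conic_hull convex_convex_hull)
  obtain a b where ab: "a \<bullet> (z - p) < b" "\<forall>x\<in>K. b < a \<bullet> x"
    using separating_hyperplane_closed_point[OF vK cK nK] by blast
  have sub: "insert 0 (\<alpha> ` A) \<subseteq> K" unfolding K_def
    by (meson hull_subset subset_trans)
  then have "0 \<in> K" by auto
  then have b0: "b < 0" using ab(2) by fastforce
  have Kge: "a \<bullet> x \<ge> 0" if x: "x \<in> K" for x
  proof (rule ccontr)
    assume "\<not> a \<bullet> x \<ge> 0"
    then have neg: "a \<bullet> x < 0" by simp
    define t where "t = b / (a \<bullet> x)"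
    have "t \<ge> 0" unfolding t_def using neg b0 by (simp add: divide_nonpos_neg less_imp_le)
    then have "t *\<^sub>R x \<in> K" using x conic_conic_hull unfolding K_def by (metis conicD)
    then have "b < a \<bullet> (t *\<^sub>R x)" using ab(2) by blast
    moreover have "a \<bullet> (t *\<^sub>R x) = b" unfolding t_def using neg by simp
    ultimately show False by simp
  qed
  define d where "d = - a"
  have dA: "\<alpha> i \<bullet> d \<le> 0" if "i \<in> A" for i
  proof -
    have "\<alpha> i \<in> K" using sub that by auto
    then have "a \<bullet> \<alpha> i \<ge> 0" by (rule Kge)
    then show ?thesis unfolding d_def by (simp add: inner_commute)
  qed
  have dz: "d \<bullet> (z - p) > 0" unfolding d_def using ab(1) b0 by simp
  have pI: "\<alpha> i \<bullet> p \<le> \<beta> i" if "i \<in> I" for i using p P that by auto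
  define tt where "tt i = (if \<alpha> i \<bullet> d > 0 then (\<beta> i - \<alpha> i \<bullet> p) / (\<alpha> i \<bullet> d) else 1)" for i
  define t where "t = Min (insert 1 (tt ` I))"
  have ttpos: "tt i > 0" if i: "i \<in> I" for i
  proof (cases "\<alpha> i \<bullet> d > 0")
    case True
    then have "i \<notin> A" using dA by force
    then have "\<alpha> i \<bullet> p < \<beta> i" using pI[OF i] i unfolding A_def by auto
    then show ?thesis using True unfolding tt_def by simp
  next
    case False
    then show ?thesis unfolding tt_def by simp
  qed
  have tpos: "t > 0" unfolding t_def using fin ttpos by (subst Min_gr_iff) auto
  have tle: "t \<le> tt i" if "i \<in> I" for i unfolding t_def using fin that by auto
  have "p + t *\<^sub>R d \<in> P"
  proof -
    have "\<alpha> i \<bullet> (p + t *\<^sub>R d) \<le> \<beta> i" if i: "i \<in> I" for i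
    proof (cases "\<alpha> i \<bullet> d > 0")
      case True
      have "t \<le> (\<beta> i - \<alpha> i \<bullet> p) / (\<alpha> i \<bullet> d)" using tle[OF i] True unfolding tt_def by simp
      then have "t * (\<alpha> i \<bullet> d) \<le> \<beta> i - \<alpha> i \<bullet> p" using True by (simp add: field_simps)
      then show ?thesis by (simp add: inner_add_right)
    next
      case False
      then have "t * (\<alpha> i \<bullet> d) \<le> 0" using tpos by (simp add: mult_nonneg_nonpos)
      then show ?thesis using pI[OF i] by (simp add: inner_add_right)
    qed
    then show ?thesis using P by auto
  qed
  then have "(z - p) \<bullet> ((p + t *\<^sub>R d) - p) \<le> 0" using vi by blast
  moreover have "(z - p) \<bullet> ((p + t *\<^sub>R d) - p) = t * (d \<bullet> (z - p))" by (simp add: inner_commute)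
  moreover have "t * (d \<bullet> (z - p)) > 0" using tpos dz by simp
  ultimately show False by (simp add: inner_commute)
qed

lemma hoffman:
  fixes \<alpha> :: "'i \<Rightarrow> 'a::euclidean_space" and \<beta> :: "'i \<Rightarrow> real"
  assumes fin: "finite I" and P: "P = {x. \<forall>i\<in>I. \<alpha> i \<bullet> x \<le> \<beta> i}" and ne: "P \<noteq> {}"
  shows "\<exists>K>0. \<forall>z r. (\<forall>i\<in>I. \<alpha> i \<bullet> z - \<beta> i \<le> r) \<longrightarrow> 0 \<le> r \<longrightarrow>
            norm (z - closest_point P z) \<le> K * r"
proof -
  define Q where "Q A = convex hull (insert 0 (\<alpha> ` A))" for A
  have "\<exists>\<delta>>0. \<forall>v. norm v \<le> \<delta> \<longrightarrow> v \<in> conic hull Q A \<longrightarrow> v \<in> Q A" if "A \<subseteq> I" for A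
  proof (rule polyhedron_conic_local)
    have "finite A" using fin that finite_subset by blast
    then show "polyhedron (Q A)" unfolding Q_def
      by (intro polytope_imp_polyhedron polytope_convex_hull) auto
    show "0 \<in> Q A" unfolding Q_def by (meson hull_subset insert_subset)
  qed
  then obtain \<delta> where \<delta>: "\<And>A. A \<subseteq> I \<Longrightarrow> \<delta> A > 0 \<and> (\<forall>v. norm v \<le> \<delta> A \<longrightarrow> v \<in> conic hull Q A \<longrightarrow> v \<in> Q A)"
    by metis
  define \<delta>0 where "\<delta>0 = Min (\<delta> ` Pow I)"
  have d0pos: "\<delta>0 > 0" unfolding \<delta>0_def using fin \<delta> by (subst Min_gr_iff) auto
  have d0le: "\<delta>0 \<le> \<delta> A" if "A \<subseteq> I" for A unfolding \<delta>0_def using fin that by auto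
  have PI: "P = (\<Inter>i\<in>I. {x. \<alpha> i \<bullet> x \<le> \<beta> i})" using P by auto
  have cP: "closed P" unfolding PI by (intro closed_INT ballI closed_halfspace_le)
  have vP: "convex P" unfolding PI by (intro convex_INT ballI convex_halfspace_le)
  have "norm (z - closest_point P z) \<le> (1 / \<delta>0) * r"
    if res: "\<forall>i\<in>I. \<alpha> i \<bullet> z - \<beta> i \<le> r" and r0: "0 \<le> r" for z r
  proof -
    define p where "p = closest_point P z"
    have pP: "p \<in> P" unfolding p_def using cP ne by (rule closest_point_in_set)
    have vi: "\<forall>w\<in>P. (z - p) \<bullet> (w - p) \<le> 0" unfolding p_def using closest_point_dot[OF vP cP] by blast
    define A where "A = {i\<in>I. \<alpha> i \<bullet> p = \<beta> i}"
    have AI: "A \<subseteq> I" unfolding A_def by auto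
    define v where "v = z - p"
    have vK: "v \<in> conic hull Q A" unfolding v_def Q_def A_def
      by (rule normal_cone_active[OF fin P pP vi])
    show ?thesis
    proof (cases "v = 0")
      case True
      then show ?thesis using r0 d0pos unfolding v_def p_def by simp
    next
      case False
      define u where "u = (\<delta> A / norm v) *\<^sub>R v"
      have dA: "\<delta> A > 0" using \<delta>[OF AI] by blast
      have nu: "norm u = \<delta> A" unfolding u_def using False dA by simp
      have "u \<in> conic hull Q A" unfolding u_def using vK dA
        by (metis conicD conic_conic_hull divide_nonneg_nonneg less_imp_le norm_ge_zero)
      then have uQ: "u \<in> Q A" using \<delta>[OF AI] nu by auto
      have "Q A \<subseteq> {q. q \<bullet> v \<le> r}" unfolding Q_def
      proof (rule hull_minimal)
        show "insert 0 (\<alpha> ` A) \<subseteq> {q. q \<bullet> v \<le> r}"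
        proof -
          have "\<alpha> i \<bullet> v \<le> r" if "i \<in> A" for i
          proof -
            have "\<alpha> i \<bullet> v = \<alpha> i \<bullet> z - \<beta> i" using that unfolding v_def A_def by (simp add: inner_diff_right)
            then show ?thesis using res that AI by auto
          qed
          then show ?thesis using r0 by auto
        qed
        show "convex {q. q \<bullet> v \<le> r}" using convex_halfspace_le[of v r] by (simp add: inner_commute)
      qed
      then have "u \<bullet> v \<le> r" using uQ by auto
      moreover have "u \<bullet> v = \<delta> A * norm v" unfolding u_def using False
        by (simp add: power2_norm_eq_inner[symmetric] power2_eq_square)
      ultimately have "\<delta> A * norm v \<le> r" by simp
      moreover have "\<delta>0 * norm v \<le> \<delta> A * norm v" using d0le[OF AI] by (simp add: mult_right_mono)
      ultimately have "\<delta>0 * norm v \<le> r" by linarith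
      then show ?thesis using d0pos unfolding v_def p_def by (simp add: field_simps)
    qed
  qed
  moreover have "1 / \<delta>0 > 0" using d0pos by simp
  ultimately show ?thesis by blast
qed

lemma polyhedron_rep0:
  fixes C :: "'a::euclidean_space set"
  assumes "polyhedron C"
  shows "\<exists>(F::'a set set) a b. finite F \<and> C = {x. \<forall>h\<in>F. a h \<bullet> x \<le> (b h :: real)}"
proof -
  obtain F where F: "finite F" "C = \<Inter>F" "\<forall>h\<in>F. \<exists>a b. a \<noteq> 0 \<and> h = {x. a \<bullet> x \<le> b}"
    using assms unfolding polyhedron_def by blast
  from F(3) obtain a b where ab0: "\<forall>h\<in>F. a h \<noteq> 0 \<and> h = {x. a h \<bullet> x \<le> b h}"
    by metis
  then have ab: "\<forall>h\<in>F. h = {x. a h \<bullet> x \<le> b h}" by blast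
  have "C = {x. \<forall>h\<in>F. a h \<bullet> x \<le> b h}"
  proof -
    have "x \<in> h \<longleftrightarrow> a h \<bullet> x \<le> b h" if "h \<in> F" for h x
    proof -
      have hh: "h = {x. a h \<bullet> x \<le> b h}" using ab that by blast
      show ?thesis by (subst hh) simp
    qed
    then show ?thesis using F(2) by blast
  qed
  then show ?thesis using F(1) by (rule_tac x=F in exI, rule_tac x=a in exI, rule_tac x=b in exI) simp
qed

lemma residual_bound:
  fixes a x y :: "'a::euclidean_space"
  assumes "a \<bullet> x \<le> b" "norm a \<le> L"
  shows "a \<bullet> ((1/2) *\<^sub>R (x + y)) - b \<le> L / 2 * norm (x - y)"
proof -
  have "a \<bullet> ((1/2) *\<^sub>R (x + y)) - b \<le> a \<bullet> ((1/2) *\<^sub>R (x + y)) - a \<bullet> x" using assms(1) by simp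
  also have "\<dots> = a \<bullet> ((1/2) *\<^sub>R (y - x))" by (simp add: algebra_simps inner_diff_right inner_add_right)
  also have "\<dots> \<le> norm a * norm ((1/2) *\<^sub>R (y - x))" by (rule norm_cauchy_schwarz)
  also have "\<dots> = norm a / 2 * norm (x - y)" by (simp add: norm_minus_commute)
  also have "\<dots> \<le> L / 2 * norm (x - y)" using assms(2) by (simp add: mult_right_mono)
  finally show ?thesis .
qed

definition hrep :: "'a::euclidean_space set \<Rightarrow> 'a set set \<Rightarrow> ('a set \<Rightarrow> 'a) \<Rightarrow> ('a set \<Rightarrow> real) \<Rightarrow> bool" where
  "hrep C F a b \<longleftrightarrow> finite F \<and> C = {x. \<forall>h\<in>F. a h \<bullet> x \<le> b h}"

lemma polyhedron_hrep:
  fixes C :: "'a::euclidean_space set"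
  assumes "polyhedron C"
  shows "\<exists>F a b. hrep C F a b"
  using polyhedron_rep0[OF assms] unfolding hrep_def .

theorem lemma1:
  fixes C1 C2 :: "'a::euclidean_space set"
  assumes "polyhedron C1" and "polyhedron C2" and "C1 \<inter> C2 \<noteq> {}"
  shows "\<exists>M>0. \<forall>x\<in>C1. \<forall>y\<in>C2.
           norm (closest_point C1 x + closest_point C2 y
                 - 2 *\<^sub>R closest_point (C1 \<inter> C2) ((1/2) *\<^sub>R (x + y)))
           \<le> M * norm (closest_point C1 x - closest_point C2 y)"
proof -
  obtain F1 a1 b1 where "hrep C1 F1 a1 b1"
    using polyhedron_hrep[OF assms(1)] by blast
  then have F1: "finite F1" "C1 = {x. \<forall>h\<in>F1. a1 h \<bullet> x \<le> (b1 h :: real)}"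
    unfolding hrep_def by auto
  obtain F2 a2 b2 where "hrep C2 F2 a2 b2"
    using polyhedron_hrep[OF assms(2)] by blast
  then have F2: "finite F2" "C2 = {x. \<forall>h\<in>F2. a2 h \<bullet> x \<le> (b2 h :: real)}"
    unfolding hrep_def by auto
  define I where "I = Inl ` F1 \<union> Inr ` F2"
  define \<alpha> where "\<alpha> = case_sum a1 a2"
  define \<beta> where "\<beta> = case_sum b1 b2"
  have finI: "finite I" unfolding I_def using F1(1) F2(1) by auto
  have PI: "C1 \<inter> C2 = {x. \<forall>i\<in>I. \<alpha> i \<bullet> x \<le> \<beta> i}"
    unfolding I_def \<alpha>_def \<beta>_def F1(2) F2(2) by (auto simp: ball_Un)
  obtain K where K: "K > 0" "\<forall>z r. (\<forall>i\<in>I. \<alpha> i \<bullet> z - \<beta> i \<le> r) \<longrightarrow> 0 \<le> r \<longrightarrow>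
            norm (z - closest_point (C1 \<inter> C2) z) \<le> K * r"
    using hoffman[OF finI PI assms(3)] by blast
  define L where "L = (\<Sum>i\<in>I. norm (\<alpha> i))"
  have L0: "L \<ge> 0" unfolding L_def by (simp add: sum_nonneg)
  have Li: "norm (\<alpha> i) \<le> L" if "i \<in> I" for i
    unfolding L_def using finI that by (intro member_le_sum) auto
  have main: "norm (x + y - 2 *\<^sub>R closest_point (C1 \<inter> C2) ((1/2) *\<^sub>R (x + y)))
           \<le> (K * L + 1) * norm (x - y)" if x: "x \<in> C1" and y: "y \<in> C2" for x y
  proof -
    define z where "z = (1/2) *\<^sub>R (x + y)"
    define r where "r = L / 2 * norm (x - y)"
    have r0: "r \<ge> 0" unfolding r_def using L0 by simp
    have res: "\<forall>i\<in>I. \<alpha> i \<bullet> z - \<beta> i \<le> r"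
    proof
      fix i assume i: "i \<in> I"
      show "\<alpha> i \<bullet> z - \<beta> i \<le> r"
      proof (cases i)
        case (Inl h)
        then have h: "h \<in> F1" using i unfolding I_def by auto
        have "a1 h \<bullet> x \<le> b1 h" using x h F1(2) by auto
        moreover have "norm (a1 h) \<le> L" using Li[OF i] Inl by (simp add: \<alpha>_def)
        ultimately have "a1 h \<bullet> ((1/2) *\<^sub>R (x + y)) - b1 h \<le> L / 2 * norm (x - y)"
          by (rule residual_bound)
        then show ?thesis unfolding z_def r_def Inl \<alpha>_def \<beta>_def by simp
      next
        case (Inr h)
        then have h: "h \<in> F2" using i unfolding I_def by auto
        have "a2 h \<bullet> y \<le> b2 h" using y h F2(2) by auto
        moreover have "norm (a2 h) \<le> L" using Li[OF i] Inr by (simp add: \<alpha>_def)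
        ultimately have "a2 h \<bullet> ((1/2) *\<^sub>R (y + x)) - b2 h \<le> L / 2 * norm (y - x)"
          by (rule residual_bound)
        then show ?thesis unfolding z_def r_def Inr \<alpha>_def \<beta>_def
          by (simp add: add.commute norm_minus_commute)
      qed
    qed
    have "norm (z - closest_point (C1 \<inter> C2) z) \<le> K * r" using K(2) res r0 by blast
    moreover have "x + y - 2 *\<^sub>R closest_point (C1 \<inter> C2) z = 2 *\<^sub>R (z - closest_point (C1 \<inter> C2) z)"
      unfolding z_def by (simp add: algebra_simps)
    ultimately have "norm (x + y - 2 *\<^sub>R closest_point (C1 \<inter> C2) z) \<le> 2 * (K * r)" by simp
    also have "\<dots> = K * L * norm (x - y)" unfolding r_def by simp
    also have "\<dots> \<le> (K * L + 1) * norm (x - y)" by (simp add: distrib_right)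
    finally show ?thesis unfolding z_def .
  qed
  moreover have "K * L + 1 > 0" using K(1) L0 by (simp add: add_nonneg_pos)
  ultimately show ?thesis
  proof (intro exI[of _ "K * L + 1"] conjI ballI)
    fix x y assume x: "x \<in> C1" and y: "y \<in> C2"
    have cx: "closest_point C1 x = x" using x by (rule closest_point_self)
    have cy: "closest_point C2 y = y" using y by (rule closest_point_self)
    show "norm (closest_point C1 x + closest_point C2 y
                 - 2 *\<^sub>R closest_point (C1 \<inter> C2) ((1/2) *\<^sub>R (x + y)))
           \<le> (K * L + 1) * norm (closest_point C1 x - closest_point C2 y)"
      unfolding cx cy by (rule main[OF x y])
  qed
qed

end
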